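(* Let $\mu$ be a Carleson measure on $\mathbb R^{n+1}_+=\mathbb R^n\times(0,\infty)$, and let $\{K_t\}_{t>0}$ be functions on $\mathbb R^n$ such that for some $\delta>0$, $|K_t(z)|\lesssim t^{-n}(1+|z|/t)^{-n-\delta}$ for all $z\in\mathbb R^n$, $t>0$. Define the measure $\tilde\mu$ on $\mathbb R^{n+1}_+$ by $d\tilde\mu(x,t)=\big(\int|K_t(x-y)|\,d\mu(y,t)\big)dx$, i.e. $\tilde\mu(E)=\iint\mathbf 1_E(x,t)|K_t(x-y)|\,dx\,d\mu(y,t)$. Then $\tilde\mu$ is a Carleson measure and $\|\tilde\mu\|_{\mathcal C}\lesssim\|\mu\|_{\mathcal C}$.
   Context: A Borel measure $\mu$ on $\mathbb R^{n+1}_+$ is a Carleson measure if $\|\mu\|_{\mathcal C}=\sup_{\epsilon>0}\sup_{y\in\mathbb R^n}\epsilon^{-n}\int_0^\epsilon\int_{|x-y|<\epsilon}d|\mu|(x,t)<\infty$; $\|\mu\|_{\mathcal C}$ is its Carleson norm. *)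

theory Defs
  imports "HOL-Analysis.Analysis"
begin

text \<open>Points of the upper half space R^{n+1}_+ are pairs (x,t) :: 'a \<times> real with t > 0,
  where 'a is a Euclidean space of dimension n = DIM('a).\<close>

definition upper_half_space :: "('a::euclidean_space \<times> real) set" where
  "upper_half_space = {p. snd p > 0}"

text \<open>A (positive) Borel measure on R^{n+1}_+: a Borel measure on 'a \<times> real giving no
  mass to the complement of the upper half space.\<close>
definition borel_measure_uhs :: "('a::euclidean_space \<times> real) measure \<Rightarrow> bool" where
  "borel_measure_uhs M \<longleftrightarrow> sets M = sets borel \<and> emeasure M (- upper_half_space) = 0"

definition carleson_norm :: "('a::euclidean_space \<times> real) measure \<Rightarrow> ennreal" where
  "carleson_norm M =
     (SUP \<epsilon>\<in>{0<..}. SUP y\<in>UNIV.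
        ennreal (\<epsilon> powr (- real DIM('a))) * emeasure M (ball y \<epsilon> \<times> {0<..<\<epsilon>}))"

definition carleson_measure :: "('a::euclidean_space \<times> real) measure \<Rightarrow> bool" where
  "carleson_measure M \<longleftrightarrow> borel_measure_uhs M \<and> carleson_norm M < \<infinity>"

definition tilde_measure ::
  "(real \<Rightarrow> 'a::euclidean_space \<Rightarrow> 'b::real_normed_vector) \<Rightarrow> ('a \<times> real) measure \<Rightarrow> ('a \<times> real) measure" where
  "tilde_measure K M = measure_of UNIV (sets borel)
     (\<lambda>E. \<integral>\<^sup>+ p. (\<integral>\<^sup>+ x. indicator E (x, snd p) * ennreal (norm (K (snd p) (x - fst p))) \<partial>lborel) \<partial>M)"

end

theory Submission
  imports Defs
begin


lemma pow2_floor: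
  fixes y :: real assumes "y \<ge> 1"
  obtains j :: nat where "2 ^ j \<le> y" "y < 2 ^ (Suc j)"
proof -
  define j where "j = nat \<lfloor>log 2 y\<rfloor>"
  have l0: "log 2 y \<ge> 0" using assms by simp
  have "real j = of_int \<lfloor>log 2 y\<rfloor>" using l0 by (simp add: j_def)
  hence a: "real j \<le> log 2 y" "log 2 y < real j + 1" by linarith+
  have "2 ^ j = 2 powr (real j)" by (simp add: powr_realpow)
  also have "\<dots> \<le> 2 powr (log 2 y)" using a by simp
  also have "\<dots> = y" using assms by simp
  finally have 1: "2 ^ j \<le> y" .
  have "y = 2 powr (log 2 y)" using assms by simp
  also have "\<dots> < 2 powr (real j + 1)" using a by simp
  also have "\<dots> = 2 ^ Suc j" using powr_realpow[of 2 "Suc j"] by (simp add: add.commute)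
  finally show ?thesis using that 1 by blast
qed

lemma dyadic:
  fixes \<nu> :: "'b measure" and g :: "'b \<Rightarrow> ennreal" and d :: "'b \<Rightarrow> real"
  assumes g: "g \<in> borel_measurable \<nu>" and dm: "d \<in> borel_measurable \<nu>" and Z: "Z \<in> sets \<nu>"
    and s: "s > 0" and mp: "m < p" and m0: "0 \<le> m" and B: "B \<ge> 0"
    and gZ: "\<And>x. x \<in> space \<nu> \<Longrightarrow> x \<notin> Z \<Longrightarrow> g x = 0"
    and gB: "\<And>x. x \<in> space \<nu> \<Longrightarrow> g x \<le> ennreal B"
    and gd: "\<And>x. x \<in> space \<nu> \<Longrightarrow> d x \<ge> s \<Longrightarrow> g x \<le> ennreal (B * (d x / s) powr (-p))"
    and nu: "\<And>k::nat. emeasure \<nu> ({x\<in>space \<nu>. d x < 2 ^ k * s} \<inter> Z) \<le> N * ennreal ((2 ^ k * s) powr m)"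
  shows "(\<integral>\<^sup>+x. g x \<partial>\<nu>) \<le> ennreal B * N * ennreal (s powr m) * ennreal (2 powr p / (1 - 2 powr (m - p)))"
proof -
  define c :: "nat \<Rightarrow> real" where "c k = 2 powr (- (real k - 1) * p)" for k
  define S where "S k = {x\<in>space \<nu>. d x < 2 ^ k * s} \<inter> Z" for k :: nat
  have Ssets: "S k \<in> sets \<nu>" for k unfolding S_def using dm Z by measurable
  have c0: "c 0 \<ge> 1" unfolding c_def using mp m0 by (simp add: ge_one_powr_ge_zero)
  have pt: "g x \<le> (\<Sum>k. ennreal (B * c k) * indicator (S k) x)" if x: "x \<in> space \<nu>" for x
  proof (cases "x \<in> Z")
    case False thus ?thesis using gZ x by simp
  next
    case True
    have single: "ennreal (B * c k) * indicator (S k) x \<le> (\<Sum>k. ennreal (B * c k) * indicator (S k) x)" for k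
      using sum_le_suminf[OF summableI, of "{k}" "\<lambda>i. ennreal (B * c i) * indicator (S i) x"] by (simp only: sum.insert_remove finite.emptyI sum.empty) simp
    show ?thesis
    proof (cases "d x < s")
      case True
      hence "x \<in> S 0" using \<open>x \<in> Z\<close> x by (simp add: S_def)
      hence "ennreal (B * c 0) * indicator (S 0) x = ennreal (B * c 0)" by simp
      moreover have "ennreal B \<le> ennreal (B * c 0)" using B c0
        by (intro ennreal_leI) (simp add: mult_le_cancel_left1)
      ultimately show ?thesis using gB[OF x] single[of 0] by (metis order_trans)
    next
      case False
      hence "d x / s \<ge> 1" using s by simp
      then obtain j :: nat where j: "2 ^ j \<le> d x / s" "d x / s < 2 ^ Suc j" by (rule pow2_floor)
      have "x \<in> S (Suc j)" using j s \<open>x \<in> Z\<close> x by (simp add: S_def field_simps)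
      hence e: "ennreal (B * c (Suc j)) * indicator (S (Suc j)) x = ennreal (B * c (Suc j))" by simp
      have "(d x / s) powr (-p) \<le> (2 ^ j) powr (-p)"
        using j mp m0 by (intro powr_mono2') auto
      also have "\<dots> = c (Suc j)" unfolding c_def
        by (simp add: powr_realpow[symmetric] powr_powr)
      finally have "B * (d x / s) powr (-p) \<le> B * c (Suc j)" using B by (simp add: mult_left_mono)
      hence "g x \<le> ennreal (B * c (Suc j))" using gd[OF x] False by (meson ennreal_leI not_le order_trans)
      thus ?thesis using single[of "Suc j"] e by (metis order_trans)
    qed
  qed
  have "(\<integral>\<^sup>+x. g x \<partial>\<nu>) \<le> (\<integral>\<^sup>+x. (\<Sum>k. ennreal (B * c k) * indicator (S k) x) \<partial>\<nu>)"
    by (intro nn_integral_mono pt)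
  also have "\<dots> = (\<Sum>k. \<integral>\<^sup>+x. ennreal (B * c k) * indicator (S k) x \<partial>\<nu>)"
    by (rule nn_integral_suminf) (use Ssets in measurable)
  also have "\<dots> = (\<Sum>k. ennreal (B * c k) * emeasure \<nu> (S k))"
    using Ssets by (simp add: nn_integral_cmult_indicator)
  also have "\<dots> \<le> (\<Sum>k. ennreal (B * c k) * (N * ennreal ((2 ^ k * s) powr m)))"
    by (intro suminf_le mult_left_mono nu[unfolded S_def[symmetric]]) auto
  also have "\<dots> = (\<Sum>k. ennreal B * N * ennreal (s powr m) * ennreal (2 powr p * (2 powr (m - p)) ^ k))"
  proof (intro suminf_cong)
    fix k :: nat
    have "c k * (2 ^ k * s) powr m = s powr m * (2 powr p * (2 powr (m - p)) ^ k)"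
      unfolding c_def using s
      by (simp add: powr_mult powr_realpow[symmetric] powr_powr powr_add[symmetric] algebra_simps)
    moreover have "c k \<ge> 0" by (simp add: c_def)
    ultimately show "ennreal (B * c k) * (N * ennreal ((2 ^ k * s) powr m)) =
        ennreal B * N * ennreal (s powr m) * ennreal (2 powr p * (2 powr (m - p)) ^ k)"
      using B by (simp add: ennreal_mult'[symmetric] ennreal_mult[symmetric] mult_ac)
  qed
  also have "\<dots> = ennreal B * N * ennreal (s powr m) * (\<Sum>k. ennreal (2 powr p * (2 powr (m - p)) ^ k))"
    by simp
  also have "(\<Sum>k. ennreal (2 powr p * (2 powr (m - p)) ^ k)) = ennreal (2 powr p / (1 - 2 powr (m - p)))"
  proof -
    have q: "2 powr (m - p) < 1" "2 powr (m - p) \<ge> 0" using mp powr_less_mono[of "m-p" 0 2] by auto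
    have sm: "summable (\<lambda>k. 2 powr p * (2 powr (m - p)) ^ k)"
      using q by (intro summable_mult summable_geometric) auto
    have "(\<Sum>k. 2 powr p * (2 powr (m - p)) ^ k) = 2 powr p * (1 / (1 - 2 powr (m - p)))"
    proof -
      have g: "(\<Sum>k. (2 powr (m - p)) ^ k) = 1/(1 - 2 powr (m-p))" using q by (intro suminf_geometric) auto
      have "summable (\<lambda>k. (2 powr (m - p)) ^ k)" using q by (intro summable_geometric) auto
      from suminf_mult[OF this, of "2 powr p"] g show ?thesis by simp
    qed
    hence "(\<Sum>k. 2 powr p * (2 powr (m - p)) ^ k) = 2 powr p / (1 - 2 powr (m - p))" by simp
    moreover have "(\<Sum>k. ennreal (2 powr p * (2 powr (m - p)) ^ k)) = ennreal (\<Sum>k. 2 powr p * (2 powr (m - p)) ^ k)"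
      by (rule suminf_ennreal2[OF _ sm]) (use q in auto)
    ultimately show ?thesis by simp
  qed
  finally show ?thesis .
qed



lemma joint_meas:
  fixes K :: "real \<Rightarrow> 'a::euclidean_space \<Rightarrow> 'b::real_normed_vector"
    and M :: "('a \<times> real) measure"
  assumes Kf: "(\<lambda>p. K (snd p) (fst p)) \<in> borel_measurable borel"
    and E: "E \<in> sets borel" and M: "sets M = sets borel"
  shows "(\<lambda>(p,x). indicator E (x, snd p) * ennreal (norm (K (snd p) (x - fst p)))) \<in> borel_measurable (M \<Otimes>\<^sub>M lborel)"
proof -
  define Kf where "Kf = (\<lambda>p. K (snd p) (fst p))"
  have s: "sets (M \<Otimes>\<^sub>M lborel) = sets (((borel::'a measure) \<Otimes>\<^sub>M (borel::real measure)) \<Otimes>\<^sub>M (borel::'a measure))"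
    by (rule sets_pair_measure_cong) (simp_all add: M, metis borel_prod)
  have K2[measurable]: "Kf \<in> borel_measurable ((borel::'a measure) \<Otimes>\<^sub>M (borel::real measure))"
    using Kf unfolding Kf_def by (simp add: borel_prod)
  have E2[measurable]: "E \<in> sets ((borel::'a measure) \<Otimes>\<^sub>M (borel::real measure))"
    using E by (metis borel_prod)
  have eq: "(\<lambda>(p,x). indicator E (x, snd p) * ennreal (norm (K (snd p) (x - fst p))))
     = (\<lambda>q. indicator E (snd q, snd (fst q)) * ennreal (norm (Kf (snd q - fst (fst q), snd (fst q)))))"
    by (auto simp: Kf_def)
  have m1: "(\<lambda>q. indicator E (snd q, snd (fst q)) * ennreal (norm (Kf (snd q - fst (fst q), snd (fst q)))))
     \<in> borel_measurable (((borel::'a measure) \<Otimes>\<^sub>M (borel::real measure)) \<Otimes>\<^sub>M (borel::'a measure))"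
    by measurable
  show ?thesis unfolding eq measurable_cong_sets[OF s refl] by (rule m1)
qed

lemma tilde_emeasure:
  fixes K :: "real \<Rightarrow> 'a::euclidean_space \<Rightarrow> 'b::real_normed_vector"
    and M :: "('a \<times> real) measure"
  assumes Kf: "(\<lambda>p. K (snd p) (fst p)) \<in> borel_measurable borel"
    and E: "E \<in> sets borel" and M: "sets M = sets borel"
  shows "emeasure (tilde_measure K M) E =
    (\<integral>\<^sup>+ p. (\<integral>\<^sup>+ x. indicator E (x, snd p) * ennreal (norm (K (snd p) (x - fst p))) \<partial>lborel) \<partial>M)"
proof -
  define f where "f = (\<lambda>E. \<integral>\<^sup>+ p. (\<integral>\<^sup>+ x. indicator E (x, snd p) * ennreal (norm (K (snd p) (x - fst p))) \<partial>lborel) \<partial>M)"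
  have inner: "(\<lambda>x. indicator E (x, snd p) * ennreal (norm (K (snd p) (x - fst p)))) \<in> borel_measurable lborel"
    if "E \<in> sets borel" for E p
    using measurable_compose_Pair1[of p M, OF _ joint_meas[OF Kf that M]] M
    by (simp add: sets_eq_imp_space_eq)
  have outer: "(\<lambda>p. \<integral>\<^sup>+ x. indicator E (x, snd p) * ennreal (norm (K (snd p) (x - fst p))) \<partial>lborel) \<in> borel_measurable M"
    if "E \<in> sets borel" for E
    using lborel.borel_measurable_nn_integral_fst[OF joint_meas[OF Kf that M]] by simp
  have sa: "sigma_algebra UNIV (sets borel)"
    using sets.sigma_algebra_axioms[of borel] by simp
  have pos: "positive (sets borel) f" unfolding positive_def f_def by simp
  have ca: "countably_additive (sets borel) f"
    unfolding countably_additive_def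
  proof (intro allI impI)
    fix A :: "nat \<Rightarrow> ('a \<times> real) set"
    assume A: "range A \<subseteq> sets borel" "disjoint_family A" "\<Union> (range A) \<in> sets borel"
    have "(\<Sum>i. f (A i)) = (\<integral>\<^sup>+ p. (\<Sum>i. \<integral>\<^sup>+ x. indicator (A i) (x, snd p) * ennreal (norm (K (snd p) (x - fst p))) \<partial>lborel) \<partial>M)"
      unfolding f_def using A by (intro nn_integral_suminf[symmetric] outer) auto
    also have "\<dots> = (\<integral>\<^sup>+ p. (\<integral>\<^sup>+ x. (\<Sum>i. indicator (A i) (x, snd p) * ennreal (norm (K (snd p) (x - fst p)))) \<partial>lborel) \<partial>M)"
      using A by (intro nn_integral_cong nn_integral_suminf[symmetric] inner) auto
    also have "\<dots> = f (\<Union> (range A))"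
      unfolding f_def ennreal_suminf_multc suminf_indicator[OF A(2)] by simp
    finally show "(\<Sum>i. f (A i)) = f (\<Union> (range A))" .
  qed
  have "emeasure (tilde_measure K M) E = f E"
    unfolding tilde_measure_def f_def[symmetric]
    by (rule emeasure_measure_of_sigma[OF sa pos ca E])
  thus ?thesis by (simp add: f_def)
qed

lemma tilde_sets: "sets (tilde_measure K M) = sets borel"
  unfolding tilde_measure_def using sets.sigma_sets_eq[of borel] by (simp add: sets_measure_of_conv)



lemma ball_meas:
  fixes c :: "'a::euclidean_space" assumes "r \<ge> 0"
  shows "emeasure lborel (ball c r) = ennreal (r ^ DIM('a) * measure lborel (ball (0::'a) 1))"
proof -
  have "emeasure lborel (ball c r) = ennreal (measure lborel (ball c r))"
    using emeasure_lborel_ball_finite[of c r] by (subst emeasure_eq_ennreal_measure) auto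
  thus ?thesis using content_ball_conv_unit_ball[OF assms, of c] by simp
qed

lemma h1: fixes a p :: real assumes "0 \<le> a" "0 \<le> p" shows "(1 + a) powr (-p) \<le> 1"
  using powr_mono2'[of "-p" 1 "1+a"] assms by simp

lemma h2: fixes a p :: real assumes "0 < a" "0 \<le> p" shows "(1 + a) powr (-p) \<le> a powr (-p)"
  using powr_mono2'[of "-p" a "1+a"] assms by simp

definition Dc :: "real \<Rightarrow> real \<Rightarrow> real" where
  "Dc m \<delta> = 2 powr (m + \<delta>) / (1 - 2 powr (m - (m + \<delta>)))"

lemma Dc_ge1: assumes "0 \<le> m" "0 < \<delta>" shows "Dc m \<delta> \<ge> 1"
proof -
  have q: "2 powr (m - (m+\<delta>)) < 1" "0 < 2 powr (m - (m+\<delta>))"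
    using assms powr_less_mono[of "m-(m+\<delta>)" 0 2] by auto
  have "1 \<le> 2 powr (m+\<delta>)" using assms by (simp add: ge_one_powr_ge_zero)
  also have "\<dots> \<le> 2 powr (m+\<delta>) / (1 - 2 powr (m - (m + \<delta>)))"
    using q by (simp add: le_divide_eq mult_left_le)
  finally show ?thesis by (simp add: Dc_def)
qed

lemma inner_bound:
  fixes K :: "real \<Rightarrow> 'a::euclidean_space \<Rightarrow> 'b::real_normed_vector" and g :: "'a \<Rightarrow> ennreal"
  assumes d: "\<delta> > 0" and A: "A \<ge> 0" and t: "t > 0"
    and Kb: "\<And>z. norm (K t z) \<le> A * t powr (- real DIM('a)) * (1 + norm z / t) powr (- (real DIM('a) + \<delta>))"
    and gm: "g \<in> borel_measurable lborel"
    and gK: "\<And>x. g x \<le> ennreal (norm (K t (x - y)))"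
  shows "(\<integral>\<^sup>+x. g x \<partial>lborel) \<le> ennreal (A * measure lborel (ball (0::'a) 1) * Dc (real DIM('a)) \<delta>)"
proof -
  define m where "m = real DIM('a)"
  define \<omega> where "\<omega> = measure lborel (ball (0::'a) 1)"
  have \<omega>: "\<omega> \<ge> 0" by (simp add: \<omega>_def)
  have B: "A * t powr (-m) \<ge> 0" using A by simp
  have "(\<integral>\<^sup>+x. g x \<partial>lborel) \<le> ennreal (A * t powr (-m)) * ennreal \<omega> * ennreal (t powr m) * ennreal (2 powr (m+\<delta>) / (1 - 2 powr (m - (m+\<delta>))))"
  proof (rule dyadic[where d="\<lambda>x. norm (x - y)" and Z=UNIV])
    show "(\<lambda>x. norm (x - y)) \<in> borel_measurable lborel" by measurable
    show "g x \<le> ennreal (A * t powr - m)" for x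
    proof -
      have "norm (K t (x - y)) \<le> A * t powr (-m) * (1 + norm (x - y) / t) powr (- (m + \<delta>))"
        using Kb unfolding m_def by blast
      also have "\<dots> \<le> A * t powr (-m) * 1"
        using B t d by (intro mult_left_mono h1) (auto simp: m_def)
      finally show ?thesis using gK[of x] by (metis ennreal_leI mult_1_right order_trans)
    qed
    show "g x \<le> ennreal (A * t powr - m * (norm (x - y) / t) powr - (m + \<delta>))" if "t \<le> norm (x - y)" for x
    proof -
      have "norm (K t (x - y)) \<le> A * t powr (-m) * (1 + norm (x - y) / t) powr (- (m + \<delta>))"
        using Kb unfolding m_def by blast
      also have "\<dots> \<le> A * t powr (-m) * (norm (x - y) / t) powr (- (m + \<delta>))"
        using B t d that by (intro mult_left_mono h2) (auto simp: m_def intro!: divide_pos_pos)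
      finally show ?thesis using gK[of x] by (metis ennreal_leI order_trans)
    qed
    show "emeasure lborel ({x \<in> space lborel. norm (x - y) < 2 ^ k * t} \<inter> UNIV) \<le> ennreal \<omega> * ennreal ((2 ^ k * t) powr m)" for k :: nat
    proof -
      have "{x \<in> space lborel. norm (x - y) < 2 ^ k * t} \<inter> UNIV = ball y (2 ^ k * t)"
        by (auto simp: dist_norm norm_minus_commute)
      moreover have "(2 ^ k * t) powr m = (2 ^ k * t) ^ DIM('a)"
        using t by (simp add: m_def powr_realpow)
      ultimately show ?thesis using ball_meas[of "2 ^ k * t" y] t \<omega>
        by (simp add: \<omega>_def ennreal_mult'[symmetric] mult.commute)
    qed
  qed (use t d A gm in \<open>auto simp: m_def\<close>)
  also have "\<dots> = ennreal (A * \<omega> * Dc m \<delta>)"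
  proof -
    have "t powr (-m) * t powr m = 1" using t by (simp add: powr_add[symmetric])
    moreover have "Dc m \<delta> \<ge> 0" using Dc_ge1[of m \<delta>] d by (simp add: m_def)
    ultimately show ?thesis using A \<omega> t
      by (simp add: ennreal_mult[symmetric] Dc_def mult_ac)
  qed
  finally show ?thesis by (simp add: m_def \<omega>_def)
qed



lemma outer_bound:
  fixes K :: "real \<Rightarrow> 'a::euclidean_space \<Rightarrow> 'b::real_normed_vector" and \<mu> :: "('a \<times> real) measure"
  assumes d: "\<delta> > 0" and A: "A \<ge> 0" and e: "\<epsilon> > 0"
    and Kf: "(\<lambda>p. K (snd p) (fst p)) \<in> borel_measurable borel"
    and Kb: "\<And>t z. t > 0 \<Longrightarrow> norm (K t z) \<le> A * t powr (- real DIM('a)) * (1 + norm z / t) powr (- (real DIM('a) + \<delta>))"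
    and M: "sets \<mu> = sets borel"
    and car: "\<And>r y. r > 0 \<Longrightarrow> ennreal (r powr (- real DIM('a))) * emeasure \<mu> (ball y r \<times> {0<..<r}) \<le> N"
  shows "emeasure (tilde_measure K \<mu>) (ball y0 \<epsilon> \<times> {0<..<\<epsilon>}) \<le>
     ennreal (A * measure lborel (ball (0::'a) 1) * Dc (real DIM('a)) \<delta>) * N * ennreal ((2*\<epsilon>) powr real DIM('a)) * ennreal (Dc (real DIM('a)) \<delta>)"
proof -
  define m where "m = real DIM('a)"
  define \<omega> where "\<omega> = measure lborel (ball (0::'a) 1)"
  have \<omega>: "\<omega> \<ge> 0" by (simp add: \<omega>_def)
  define Q where "Q = ball y0 \<epsilon> \<times> {0<..<\<epsilon>}"
  have Qs: "Q \<in> sets borel" unfolding Q_def by (intro borel_open open_Times) auto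
  define F where "F p = (\<integral>\<^sup>+ x. indicator Q (x, snd p) * ennreal (norm (K (snd p) (x - fst p))) \<partial>lborel)" for p
  have Fm: "F \<in> borel_measurable \<mu>"
    unfolding F_def using lborel.borel_measurable_nn_integral_fst[OF joint_meas[OF Kf Qs M]] by simp
  have inm: "(\<lambda>x. indicator Q (x, snd p) * ennreal (norm (K (snd p) (x - fst p)))) \<in> borel_measurable lborel" for p
    using measurable_compose_Pair1[of p \<mu>, OF _ joint_meas[OF Kf Qs M]] M
    by (simp add: sets_eq_imp_space_eq)
  define Z :: "('a \<times> real) set" where "Z = UNIV \<times> {0<..<\<epsilon>}"
  have Zs: "Z \<in> sets \<mu>" unfolding M Z_def by (intro borel_open open_Times) auto
  have Dc1: "Dc m \<delta> \<ge> 1" using Dc_ge1[of m \<delta>] d by (simp add: m_def)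
  have F0: "F p = 0" if "p \<notin> Z" for p
  proof -
    have "indicator Q (x, snd p) = (0::ennreal)" for x using that by (cases p) (auto simp: Q_def Z_def indicator_def)
    thus ?thesis by (simp add: F_def)
  qed
  have "emeasure (tilde_measure K \<mu>) Q = (\<integral>\<^sup>+ p. F p \<partial>\<mu>)"
    unfolding F_def by (rule tilde_emeasure[OF Kf Qs M])
  also have "\<dots> \<le> ennreal (A * \<omega> * Dc m \<delta>) * N * ennreal ((2*\<epsilon>) powr m) * ennreal (2 powr (m+\<delta>) / (1 - 2 powr (m - (m+\<delta>))))"
  proof (rule dyadic[where d="\<lambda>p. norm (fst p - y0)" and Z=Z])
    show "(\<lambda>p. norm (fst p - y0)) \<in> borel_measurable \<mu>"
      unfolding measurable_cong_sets[OF M refl]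
      by (intro borel_measurable_continuous_onI continuous_intros)
    show "F p = 0" if "p \<notin> Z" for p using F0 that .
    show "F p \<le> ennreal (A * \<omega> * Dc m \<delta>)" for p
    proof (cases "p \<in> Z")
      case False thus ?thesis using F0 by simp
    next
      case True
      hence t: "snd p > 0" by (cases p) (simp add: Z_def)
      show ?thesis unfolding F_def \<omega>_def m_def
        by (rule inner_bound[where K=K and t="snd p" and y="fst p", OF d A t Kb[OF t] inm[of p]]) (simp add: indicator_def)
    qed
    show "F p \<le> ennreal (A * \<omega> * Dc m \<delta> * (norm (fst p - y0) / (2*\<epsilon>)) powr - (m + \<delta>))"
      if dp: "2*\<epsilon> \<le> norm (fst p - y0)" for p
    proof (cases "p \<in> Z")
      case False thus ?thesis using F0 by simp
    next
      case True
      obtain y t where p: "p = (y, t)" by fastforce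
      have t: "0 < t" "t < \<epsilon>" using True p by (auto simp: Z_def)
      define dd where "dd = norm (y - y0)"
      have dd: "2 * \<epsilon> \<le> dd" using dp p by (simp add: dd_def)
      define c1 where "c1 = A * \<epsilon> powr \<delta> * (dd/2) powr (-(m+\<delta>))"
      have c1: "c1 \<ge> 0" using A by (simp add: c1_def)
      have pt: "indicator Q (x, t) * ennreal (norm (K t (x - y))) \<le> ennreal c1 * indicator (ball y0 \<epsilon>) x" for x
      proof (cases "x \<in> ball y0 \<epsilon>")
        case False thus ?thesis by (simp add: Q_def)
      next
        case True
        have xe: "norm (x - y0) < \<epsilon>" using True by (simp add: dist_norm norm_minus_commute)
        have "dd \<le> norm (x - y) + norm (x - y0)"
          unfolding dd_def using norm_triangle_ineq[of "y - x" "x - y0"] by (simp add: norm_minus_commute)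
        hence z: "norm (x - y) \<ge> dd / 2" "norm (x - y) > 0" using xe dd e by auto
        have "norm (K t (x - y)) \<le> A * t powr (-m) * (1 + norm (x - y) / t) powr (- (m + \<delta>))"
          using Kb[OF t(1)] unfolding m_def by blast
        also have "\<dots> \<le> A * t powr (-m) * (norm (x - y) / t) powr (- (m + \<delta>))"
          using A t d z by (intro mult_left_mono h2) (auto simp: m_def intro!: divide_pos_pos)
        also have "\<dots> = A * t powr \<delta> * norm (x - y) powr (- (m + \<delta>))"
        proof -
          have "(norm (x - y) / t) powr (- (m + \<delta>)) = norm (x - y) powr (- (m + \<delta>)) * t powr (m+\<delta>)"
            using t z by (simp add: powr_divide powr_minus divide_simps powr_add[symmetric])
          moreover have "t powr (-m) * t powr (m+\<delta>) = t powr \<delta>" using t by (simp add: powr_add[symmetric])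
          ultimately show ?thesis by (simp add: mult_ac)
        qed
        also have "\<dots> \<le> A * \<epsilon> powr \<delta> * (dd/2) powr (- (m + \<delta>))"
        proof (intro mult_mono mult_left_mono)
          show "t powr \<delta> \<le> \<epsilon> powr \<delta>" using t d by (intro powr_mono2) auto
          show "norm (x - y) powr - (m + \<delta>) \<le> (dd / 2) powr - (m + \<delta>)"
            using z d e dd by (intro powr_mono2') (auto simp: m_def)
        qed (use A in auto)
        finally have "norm (K t (x - y)) \<le> c1" unfolding c1_def .
        thus ?thesis using True t by (simp add: Q_def ennreal_leI indicator_def)
      qed
      have "F p = (\<integral>\<^sup>+ x. indicator Q (x, t) * ennreal (norm (K t (x - y))) \<partial>lborel)"
        by (simp add: F_def p)
      also have "\<dots> \<le> (\<integral>\<^sup>+ x. ennreal c1 * indicator (ball y0 \<epsilon>) x \<partial>lborel)"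
        by (intro nn_integral_mono pt)
      also have "\<dots> = ennreal c1 * ennreal (\<epsilon> ^ DIM('a) * \<omega>)"
        using e by (simp add: nn_integral_cmult_indicator ball_meas \<omega>_def)
      also have "\<dots> = ennreal (A * \<omega> * (dd / (2*\<epsilon>)) powr - (m + \<delta>))"
      proof -
        have "\<epsilon> ^ DIM('a) = \<epsilon> powr m" using e by (simp add: m_def powr_realpow)
        moreover have "(dd / (2*\<epsilon>)) powr - (m + \<delta>) = (dd/2) powr (-(m+\<delta>)) * \<epsilon> powr m * \<epsilon> powr \<delta>"
        proof -
          have "dd / (2*\<epsilon>) = (dd/2) / \<epsilon>" by simp
          hence "(dd / (2*\<epsilon>)) powr - (m + \<delta>) = (dd/2) powr (-(m+\<delta>)) / \<epsilon> powr (-(m+\<delta>))"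
            using e dd powr_divide[of "dd/2" \<epsilon> "-(m+\<delta>)"] by simp
          also have "\<dots> = (dd/2) powr (-(m+\<delta>)) * \<epsilon> powr (m+\<delta>)"
          proof -
            have "\<epsilon> powr (-(m+\<delta>)) * \<epsilon> powr (m+\<delta>) = 1"
              using e by (simp only: powr_add[symmetric]) simp
            hence "inverse (\<epsilon> powr (-(m+\<delta>))) = \<epsilon> powr (m+\<delta>)" by (rule inverse_unique)
            thus ?thesis by (simp only: divide_inverse)
          qed
          finally have "(dd / (2*\<epsilon>)) powr - (m + \<delta>) = (dd/2) powr (-(m+\<delta>)) * \<epsilon> powr (m+\<delta>)" .
          thus ?thesis by (simp add: powr_add)
        qed
        ultimately show ?thesis using c1 \<omega>
          by (simp add: c1_def ennreal_mult[symmetric] mult_ac)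
      qed
      also have "\<dots> \<le> ennreal (A * \<omega> * Dc m \<delta> * (dd / (2*\<epsilon>)) powr - (m + \<delta>))"
      proof (intro ennreal_leI)
        have X: "0 \<le> A * \<omega> * (dd / (2*\<epsilon>)) powr - (m + \<delta>)" using A \<omega> by simp
        from mult_left_mono[OF Dc1 X] show "A * \<omega> * (dd / (2*\<epsilon>)) powr - (m + \<delta>) \<le> A * \<omega> * Dc m \<delta> * (dd / (2*\<epsilon>)) powr - (m + \<delta>)"
          by (simp add: mult_ac)
      qed
      finally show ?thesis by (simp add: p dd_def)
    qed
    show "emeasure \<mu> ({p \<in> space \<mu>. norm (fst p - y0) < 2 ^ k * (2*\<epsilon>)} \<inter> Z) \<le> N * ennreal ((2 ^ k * (2*\<epsilon>)) powr m)" for k :: nat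
    proof -
      define r where "r = 2 ^ k * (2*\<epsilon>)"
      have r: "r > 0" "\<epsilon> \<le> r" using e unfolding r_def
        by auto (metis mult.commute mult_2 mult_le_cancel_right1 one_le_power linorder_not_le one_le_numeral order_trans add_le_same_cancel1 less_eq_real_def)
      have big: "ball y0 r \<times> {0<..<r} \<in> sets \<mu>" unfolding M by (intro borel_open open_Times) auto
      have "{p \<in> space \<mu>. norm (fst p - y0) < r} \<inter> Z \<subseteq> ball y0 r \<times> {0<..<r}"
        using r by (auto simp: Z_def dist_norm norm_minus_commute)
      hence "emeasure \<mu> ({p \<in> space \<mu>. norm (fst p - y0) < r} \<inter> Z) \<le> emeasure \<mu> (ball y0 r \<times> {0<..<r})"
        using big by (intro emeasure_mono)
      also have "\<dots> = ennreal (r powr m) * (ennreal (r powr (-m)) * emeasure \<mu> (ball y0 r \<times> {0<..<r}))"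
      proof -
        have "r powr m * r powr (-m) = 1" using r by (simp add: powr_add[symmetric])
        hence "ennreal (r powr m) * ennreal (r powr (-m)) = 1" by (simp add: ennreal_mult[symmetric])
        thus ?thesis by (simp add: mult.assoc[symmetric])
      qed
      also have "\<dots> \<le> ennreal (r powr m) * N"
        using car[OF r(1), of y0] by (intro mult_left_mono) (auto simp: m_def)
      finally show ?thesis by (simp add: r_def mult.commute)
    qed
  qed (use e d A Fm Zs \<omega> Dc1 in \<open>auto simp: m_def\<close>)
  finally show ?thesis by (simp add: Q_def m_def \<omega>_def Dc_def)
qed



lemma uhs_c_sets: "- upper_half_space \<in> sets (borel :: ('a::euclidean_space \<times> real) measure)"
proof -
  have "- upper_half_space = {p :: 'a \<times> real. snd p \<le> 0}" by (auto simp: upper_half_space_def)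
  moreover have "closed {p :: 'a \<times> real. snd p \<le> 0}"
    by (intro closed_Collect_le continuous_intros)
  ultimately show ?thesis by simp
qed

theorem lemma4p10:
  fixes \<delta> A :: real
  assumes "\<delta> > 0"
  shows "\<exists>C::real. C \<ge> 0 \<and>
    (\<forall>(\<mu>::('a::euclidean_space \<times> real) measure) (K::real \<Rightarrow> 'a \<Rightarrow> complex).
       carleson_measure \<mu>
       \<and> (\<lambda>p. K (snd p) (fst p)) \<in> borel_measurable borel
       \<and> (\<forall>t>0. \<forall>z. norm (K t z) \<le> A * t powr (- real DIM('a)) * (1 + norm z / t) powr (- (real DIM('a) + \<delta>)))
       \<longrightarrow> carleson_measure (tilde_measure K \<mu>)
           \<and> carleson_norm (tilde_measure K \<mu>) \<le> ennreal C * carleson_norm \<mu>)"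
proof -
  define m where "m = real DIM('a)"
  define \<omega> where "\<omega> = measure lborel (ball (0::'a) 1)"
  have \<omega>: "\<omega> \<ge> 0" by (simp add: \<omega>_def)
  have Dc1: "Dc m \<delta> \<ge> 1" using Dc_ge1[of m \<delta>] assms by (simp add: m_def)
  define C where "C = max A 0 * \<omega> * Dc m \<delta> * 2 powr m * Dc m \<delta>"
  have C0: "C \<ge> 0" using \<omega> Dc1 by (simp add: C_def)
  show ?thesis
  proof (intro exI[of _ C] conjI C0 allI impI)
    fix \<mu> :: "('a \<times> real) measure" and K :: "real \<Rightarrow> 'a \<Rightarrow> complex"
    assume H: "carleson_measure \<mu> \<and> (\<lambda>p. K (snd p) (fst p)) \<in> borel_measurable borel
       \<and> (\<forall>t>0. \<forall>z. norm (K t z) \<le> A * t powr (- real DIM('a)) * (1 + norm z / t) powr (- (real DIM('a) + \<delta>)))"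
    have Kf: "(\<lambda>p. K (snd p) (fst p)) \<in> borel_measurable borel" using H by blast
    have Kb: "\<And>t z. t > 0 \<Longrightarrow> norm (K t z) \<le> A * t powr (- real DIM('a)) * (1 + norm z / t) powr (- (real DIM('a) + \<delta>))"
      using H by blast
    have A: "A \<ge> 0" using Kb[of 1 0] norm_ge_zero[of "K 1 0"] by (simp, linarith)
    have CA: "C = A * \<omega> * Dc m \<delta> * 2 powr m * Dc m \<delta>" using A by (simp add: C_def)
    have M: "sets \<mu> = sets borel" and null: "emeasure \<mu> (- upper_half_space) = 0"
      and Nfin: "carleson_norm \<mu> < \<infinity>"
      using H by (auto simp: carleson_measure_def borel_measure_uhs_def)
    define N where "N = carleson_norm \<mu>"
    have car: "ennreal (r powr (- real DIM('a))) * emeasure \<mu> (ball y r \<times> {0<..<r}) \<le> N" if "r > 0" for r y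
      unfolding N_def carleson_norm_def
      by (rule SUP_upper2[of r], use that in simp, rule SUP_upper2[of y]) auto
    have bound: "carleson_norm (tilde_measure K \<mu>) \<le> ennreal C * N"
      unfolding carleson_norm_def
    proof (intro SUP_least)
      fix \<epsilon> :: real and y0 :: 'a assume e: "\<epsilon> \<in> {0<..}"
      hence e: "\<epsilon> > 0" by simp
      have "ennreal (\<epsilon> powr (- real DIM('a))) * emeasure (tilde_measure K \<mu>) (ball y0 \<epsilon> \<times> {0<..<\<epsilon>})
         \<le> ennreal (\<epsilon> powr (- m)) * (ennreal (A * \<omega> * Dc m \<delta>) * N * ennreal ((2*\<epsilon>) powr m) * ennreal (Dc m \<delta>))"
        unfolding m_def \<omega>_def
        by (intro mult_left_mono outer_bound[OF assms A e Kf Kb M car]) auto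
      also have "\<dots> = ennreal C * N"
      proof -
        have "\<epsilon> powr (- m) * (2*\<epsilon>) powr m = 2 powr m"
          using e by (simp add: powr_mult powr_add[symmetric] mult.left_commute[of "\<epsilon> powr (-m)"])
        hence "\<epsilon> powr (- m) * (A * \<omega> * Dc m \<delta>) * (2*\<epsilon>) powr m * Dc m \<delta> = C"
          unfolding CA by (simp add: mult_ac)
        moreover have "A * \<omega> * Dc m \<delta> \<ge> 0" using A \<omega> Dc1 by simp
        moreover have "(2*\<epsilon>) powr m \<ge> 0" "\<epsilon> powr (- m) \<ge> 0" "Dc m \<delta> \<ge> 0" using Dc1 by auto
        ultimately have "ennreal (\<epsilon> powr (- m)) * ennreal (A * \<omega> * Dc m \<delta>) * ennreal ((2*\<epsilon>) powr m) * ennreal (Dc m \<delta>) = ennreal C"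
          by (simp only: ennreal_mult[symmetric] mult_nonneg_nonneg)
        thus ?thesis by (simp add: mult_ac)
      qed
      finally show "ennreal (\<epsilon> powr (- real DIM('a))) * emeasure (tilde_measure K \<mu>) (ball y0 \<epsilon> \<times> {0<..<\<epsilon>}) \<le> ennreal C * N" .
    qed
    have uhs: "emeasure (tilde_measure K \<mu>) (- upper_half_space) = 0"
    proof -
      have "emeasure (tilde_measure K \<mu>) (- upper_half_space) =
        (\<integral>\<^sup>+ p. (\<integral>\<^sup>+ x. indicator (- upper_half_space) (x, snd p) * ennreal (norm (K (snd p) (x - fst p))) \<partial>lborel) \<partial>\<mu>)"
        by (rule tilde_emeasure[OF Kf uhs_c_sets M])
      also have "\<dots> = (\<integral>\<^sup>+ p. 0 \<partial>\<mu>)"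
      proof (rule nn_integral_cong_AE)
        have nn: "- upper_half_space \<in> null_sets \<mu>" using null uhs_c_sets M by (simp add: null_sets_def)
        show "AE p in \<mu>. (\<integral>\<^sup>+ x. indicator (- upper_half_space) (x, snd p) * ennreal (norm (K (snd p) (x - fst p))) \<partial>lborel) = 0"
          by (rule AE_I'[OF nn]) (auto simp: upper_half_space_def indicator_def)
      qed
      finally show ?thesis by simp
    qed
    show "carleson_measure (tilde_measure K \<mu>)"
      unfolding carleson_measure_def borel_measure_uhs_def
      using tilde_sets uhs bound Nfin by (auto simp: N_def ennreal_mult_less_top le_less_trans)
    show "carleson_norm (tilde_measure K \<mu>) \<le> ennreal C * carleson_norm \<mu>" using bound by (simp add: N_def)
  qed
qed


end
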